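(* Let $X$ be a real Banach space whose norm is Fréchet differentiable and let $(S,\mu)$ be a complete, $\sigma$-finite positive measure space. Let $f\in L^1(\mu,X)$ be a smooth point of $L^1(\mu,X)$ such that $Z(f)^c=\{s\in S:f(s)\neq0\}$ is an atom and $f(s)$ is a left symmetric point of $X$ for each $s\in S$. Then $f$ is a left symmetric point of $L^1(\mu,X)$.
   Context: $L^1(\mu,X)$ is the Lebesgue–Bochner space of (classes of a.e. equal) strongly measurable $f:S\to X$ with $\|f\|=\int_S\|f(s)\|\,d\mu(s)<\infty$; $Z(f)=\{s:f(s)=0\}$. In a real normed space $Y$, $x\perp_{BJ}y$ means $\|x+\lambda y\|\ge\|x\|$ for all $\lambda\in\mathbb{R}$; $x$ is a left symmetric point if $x\perp_{BJ}y$ implies $y\perp_{BJ}x$ for all $y\in Y$. A non-zero $x$ is smooth if there is a unique norm-one $F\in Y^*$ with $F(x)=\|x\|$. The norm of $X$ is Fréchet differentiable if for every non-zero $x$ there is $\varphi\in X^*$ with $\lim_{h\to0}\big|\|x+h\|-\|x\|-\varphi(h)\big|/\|h\|=0$. A measurable set $A$ is an atom if $\mu(A)>0$ and every measurable $B\subseteq A$ has $\mu(B)=0$ or $\mu(B)=\mu(A)$. *)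

theory Defs
  imports "HOL-Analysis.Analysis"
begin

definition bj_orth :: "'x::real_normed_vector \<Rightarrow> 'x \<Rightarrow> bool" where
  "bj_orth x y \<longleftrightarrow> (\<forall>t::real. norm (x + t *\<^sub>R y) \<ge> norm x)"

definition left_symmetric :: "'x::real_normed_vector \<Rightarrow> bool" where
  "left_symmetric x \<longleftrightarrow> (\<forall>y. bj_orth x y \<longrightarrow> bj_orth y x)"

definition frechet_diff_norm :: "'x::real_normed_vector itself \<Rightarrow> bool" where
  "frechet_diff_norm _ \<longleftrightarrow> (\<forall>x::'x. x \<noteq> 0 \<longrightarrow> norm differentiable (at x))"

definition is_atom :: "'s measure \<Rightarrow> 's set \<Rightarrow> bool" where
  "is_atom M A \<longleftrightarrow> A \<in> sets M \<and> emeasure M A > 0 \<and>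
     (\<forall>B\<in>sets M. B \<subseteq> A \<longrightarrow> emeasure M B = 0 \<or> emeasure M B = emeasure M A)"

definition strongly_measurable :: "'s measure \<Rightarrow> ('s \<Rightarrow> 'x::real_normed_vector) \<Rightarrow> bool" where
  "strongly_measurable M f \<longleftrightarrow>
     (\<exists>u::nat \<Rightarrow> 's \<Rightarrow> 'x.
        (\<forall>n. finite (u n ` space M) \<and> (\<forall>x. u n -` {x} \<inter> space M \<in> sets M)) \<and>
        (AE s in M. (\<lambda>n. u n s) \<longlonglongrightarrow> f s))"

definition L1 :: "'s measure \<Rightarrow> ('s \<Rightarrow> 'x::real_normed_vector) set" where
  "L1 M = {f. strongly_measurable M f \<and> (\<integral>\<^sup>+ s. ennreal (norm (f s)) \<partial>M) < \<infinity>}"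

definition L1norm :: "'s measure \<Rightarrow> ('s \<Rightarrow> 'x::real_normed_vector) \<Rightarrow> real" where
  "L1norm M f = enn2real (\<integral>\<^sup>+ s. ennreal (norm (f s)) \<partial>M)"

definition L1_orth :: "'s measure \<Rightarrow> ('s \<Rightarrow> 'x::real_normed_vector) \<Rightarrow> ('s \<Rightarrow> 'x) \<Rightarrow> bool" where
  "L1_orth M f g \<longleftrightarrow> (\<forall>t::real. L1norm M (\<lambda>s. f s + t *\<^sub>R g s) \<ge> L1norm M f)"

definition L1_left_symmetric :: "'s measure \<Rightarrow> ('s \<Rightarrow> 'x::real_normed_vector) \<Rightarrow> bool" where
  "L1_left_symmetric M f \<longleftrightarrow> (\<forall>g\<in>L1 M. L1_orth M f g \<longrightarrow> L1_orth M g f)"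

text \<open>Continuous linear functionals on L^1 (given by their values on representatives).\<close>
definition L1_dual :: "'s measure \<Rightarrow> (('s \<Rightarrow> 'x::real_normed_vector) \<Rightarrow> real) set" where
  "L1_dual M = {F. (\<forall>g\<in>L1 M. \<forall>h\<in>L1 M. F (\<lambda>s. g s + h s) = F g + F h) \<and>
                   (\<forall>g\<in>L1 M. \<forall>c::real. F (\<lambda>s. c *\<^sub>R g s) = c * F g) \<and>
                   (\<exists>K. \<forall>g\<in>L1 M. \<bar>F g\<bar> \<le> K * L1norm M g)}"

definition L1_dual_norm :: "'s measure \<Rightarrow> (('s \<Rightarrow> 'x::real_normed_vector) \<Rightarrow> real) \<Rightarrow> real" where
  "L1_dual_norm M F = Sup {\<bar>F g\<bar> | g. g \<in> L1 M \<and> L1norm M g \<le> 1}"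

definition L1_norming :: "'s measure \<Rightarrow> ('s \<Rightarrow> 'x::real_normed_vector) \<Rightarrow> (('s \<Rightarrow> 'x) \<Rightarrow> real) \<Rightarrow> bool" where
  "L1_norming M f F \<longleftrightarrow> F \<in> L1_dual M \<and> L1_dual_norm M F = 1 \<and> F f = L1norm M f"

text \<open>Smooth point: non-zero element of L^1 with a unique norming functional
  (uniqueness as functionals on L^1, i.e. agreement on all of L^1).\<close>
definition L1_smooth :: "'s measure \<Rightarrow> ('s \<Rightarrow> 'x::real_normed_vector) \<Rightarrow> bool" where
  "L1_smooth M f \<longleftrightarrow> f \<in> L1 M \<and> L1norm M f \<noteq> 0 \<and>
     (\<exists>F. L1_norming M f F) \<and>
     (\<forall>F G. L1_norming M f F \<longrightarrow> L1_norming M f G \<longrightarrow> (\<forall>g\<in>L1 M. F g = G g))"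

end

theory Submission
  imports Defs
begin


lemma sf_iff:
  "(finite (u ` space M) \<and> (\<forall>x. u -` {x} \<inter> space M \<in> sets M)) \<longleftrightarrow> simple_function M u"
proof
  assume "simple_function M u" then show "finite (u ` space M) \<and> (\<forall>x. u -` {x} \<inter> space M \<in> sets M)"
  proof (intro conjI allI)
    fix x
    show "u -` {x} \<inter> space M \<in> sets M"
    proof (cases "x \<in> u ` space M")
      case True then show ?thesis using \<open>simple_function M u\<close> unfolding simple_function_def by blast
    next
      case False then have "u -` {x} \<inter> space M = {}" by auto
      then show ?thesis by simp
    qed
  qed (use \<open>simple_function M u\<close> in \<open>simp add: simple_function_def\<close>)
qed (auto simp: simple_function_def)

lemma SM_def2: "strongly_measurable M f \<longleftrightarrow>
     (\<exists>u::nat \<Rightarrow> 's \<Rightarrow> 'x::real_normed_vector. (\<forall>n. simple_function M (u n)) \<and>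
        (AE s in M. (\<lambda>n. u n s) \<longlonglongrightarrow> f s))"
  unfolding strongly_measurable_def sf_iff ..

lemma SM_const: "strongly_measurable M (\<lambda>s. c)"
  unfolding SM_def2 by (rule exI[of _ "\<lambda>n s. c"]) auto

lemma SM_add: assumes "strongly_measurable M f" "strongly_measurable M g"
  shows "strongly_measurable M (\<lambda>s. f s + g s)"
proof -
  obtain u where u: "\<forall>n. simple_function M (u n)" "AE s in M. (\<lambda>n. u n s) \<longlonglongrightarrow> f s"
    using assms(1) unfolding SM_def2 by blast
  obtain v where v: "\<forall>n. simple_function M (v n)" "AE s in M. (\<lambda>n. v n s) \<longlonglongrightarrow> g s"
    using assms(2) unfolding SM_def2 by blast
  show ?thesis unfolding SM_def2
    apply (rule exI[of _ "\<lambda>n s. u n s + v n s"])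
     apply (rule conjI)
    using u(1) v(1) apply (intro allI) apply (rule simple_function_compose2[where h="(+)"]; simp)
    using u(2) v(2) by eventually_elim (rule tendsto_add; assumption)
qed

lemma SM_scale: assumes "strongly_measurable M f"
  shows "strongly_measurable M (\<lambda>s. c *\<^sub>R f s)"
proof -
  obtain u where u: "\<forall>n. simple_function M (u n)" "AE s in M. (\<lambda>n. u n s) \<longlonglongrightarrow> f s"
    using assms(1) unfolding SM_def2 by blast
  show ?thesis unfolding SM_def2
    apply (rule exI[of _ "\<lambda>n s. c *\<^sub>R u n s"], rule conjI)
    using u(1) apply (intro allI) apply (rule simple_function_compose2[where h="\<lambda>a b. a *\<^sub>R b" and f="\<lambda>s. c"]; simp)
    using u(2) by eventually_elim (rule tendsto_scaleR[OF tendsto_const]; assumption)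
qed

lemma SM_ind: assumes "strongly_measurable M f" "A \<in> sets M"
  shows "strongly_measurable M (\<lambda>s. indicator A s *\<^sub>R f s)"
proof -
  obtain u where u: "\<forall>n. simple_function M (u n)" "AE s in M. (\<lambda>n. u n s) \<longlonglongrightarrow> f s"
    using assms(1) unfolding SM_def2 by blast
  have "simple_function M (\<lambda>s. indicator A s *\<^sub>R u n s)" for n
    by (rule simple_function_compose2[where h="\<lambda>a b. a *\<^sub>R b"]) (use u assms(2) in auto)
  then show ?thesis unfolding SM_def2
    apply (intro exI[of _ "\<lambda>n s. indicator A s *\<^sub>R u n s"] conjI allI, simp)
    using u(2) by eventually_elim (rule tendsto_scaleR[OF tendsto_const]; assumption)
qed

lemma ae_lim_meas:
  fixes h :: "'a \<Rightarrow> 'b::metric_space"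
  assumes cm: "complete_measure M" and um: "\<And>n. u n \<in> borel_measurable M"
    and ae: "AE s in M. (\<lambda>n. u n s) \<longlonglongrightarrow> h s"
  shows "h \<in> borel_measurable M"
proof -
  obtain N where N: "{s \<in> space M. \<not> (\<lambda>n. u n s) \<longlonglongrightarrow> h s} \<subseteq> N" "emeasure M N = 0" "N \<in> sets M"
    using ae by (rule AE_E)
  define D where "D = {s \<in> space M. \<not> (\<lambda>n. u n s) \<longlonglongrightarrow> h s}"
  have Nnull: "N \<in> null_sets M" using N by auto
  have DN: "D \<subseteq> N" using N(1) unfolding D_def .
  have Dsp: "D \<subseteq> space M" unfolding D_def by blast
  have sub: "B \<in> sets M" if "B \<subseteq> D" for B
  proof -
    have "B \<subseteq> N" using that DN by blast
    then show ?thesis by (rule complete_measure.complete[OF cm]) (rule Nnull)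
  qed
  have D: "D \<in> sets M" using sub by blast
  obtain h0 :: 'b where True by simp
  define h' where "h' s = (if s \<in> D then h0 else h s)" for s
  have "(\<lambda>s. if s \<in> D then h0 else u n s) \<in> borel_measurable M" for n
    by (rule measurable_If_set) (use um D in auto)
  moreover have "(\<lambda>n. if s \<in> D then h0 else u n s) \<longlonglongrightarrow> h' s" if "s \<in> space M" for s
  proof (cases "s \<in> D")
    case True then show ?thesis by (simp add: h'_def)
  next
    case False then have "(\<lambda>n. u n s) \<longlonglongrightarrow> h s" using that unfolding D_def by blast
    then show ?thesis using False by (simp add: h'_def)
  qed
  ultimately have h'm: "h' \<in> borel_measurable M"
    by (rule borel_measurable_LIMSEQ_metric)
  show ?thesis
  proof (rule borel_measurableI)
    fix S :: "'b set" assume "open S"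
    have "h -` S \<inter> space M = (h' -` S \<inter> space M - D) \<union> (h -` S \<inter> D)"
      using Dsp by (auto simp: h'_def)
    moreover have "h' -` S \<inter> space M \<in> sets M"
      using h'm \<open>open S\<close> by (simp add: borel_open measurable_sets)
    moreover have "h -` S \<inter> D \<in> sets M" by (rule sub) blast
    ultimately show "h -` S \<inter> space M \<in> sets M" using D by auto
  qed
qed

lemma SM_meas:
  fixes k :: "'a \<Rightarrow> 'x::real_normed_vector" and \<phi> :: "'x \<Rightarrow> real"
  assumes cm: "complete_measure M" and sm: "strongly_measurable M k" and c: "\<And>v. isCont \<phi> v"
  shows "(\<lambda>s. \<phi> (k s)) \<in> borel_measurable M"
proof -
  obtain u where u: "\<forall>n. simple_function M (u n)" "AE s in M. (\<lambda>n. u n s) \<longlonglongrightarrow> k s"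
    using sm unfolding SM_def2 by blast
  have "simple_function M (\<lambda>s. \<phi> (u n s))" for n
    using simple_function_compose[OF u(1)[rule_format, of n], of \<phi>] by (simp add: comp_def)
  then have "(\<lambda>s. \<phi> (u n s)) \<in> borel_measurable M" for n
    by (rule borel_measurable_simple_function)
  moreover have "AE s in M. (\<lambda>n. \<phi> (u n s)) \<longlonglongrightarrow> \<phi> (k s)"
    using u(2) by eventually_elim (rule isCont_tendsto_compose[OF c])
  ultimately show ?thesis by (rule ae_lim_meas[OF cm])
qed

lemma isCont_norm': "isCont norm (v::'x::real_normed_vector)"
  by (rule continuous_norm[OF continuous_ident])

lemma L1_meas: "complete_measure M \<Longrightarrow> k \<in> L1 M \<Longrightarrow> (\<lambda>s. norm (k s)) \<in> borel_measurable M"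
  unfolding L1_def by (auto intro: SM_meas isCont_norm')

lemma L1_int: assumes "complete_measure M" "k \<in> L1 M"
  shows "integrable M (\<lambda>s. norm (k s))"
  unfolding integrable_iff_bounded using L1_meas[OF assms] assms(2) by (simp add: L1_def)

lemma L1norm_int: assumes "complete_measure M" "k \<in> L1 M"
  shows "L1norm M k = (\<integral>s. norm (k s) \<partial>M)"
proof -
  have "(\<integral>\<^sup>+ s. ennreal (norm (k s)) \<partial>M) = ennreal (\<integral>s. norm (k s) \<partial>M)"
    by (rule nn_integral_eq_integral[OF L1_int[OF assms]]) simp
  then show ?thesis unfolding L1norm_def by simp
qed

lemma L1I: assumes "complete_measure M" "strongly_measurable M k" "integrable M (\<lambda>s. norm (k s))"
  shows "k \<in> L1 M"
  using assms(3) unfolding integrable_iff_bounded L1_def using assms(2) by simp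

lemma L1_add: assumes cm: "complete_measure M" and "k \<in> L1 M" "l \<in> L1 M"
  shows "(\<lambda>s. k s + l s) \<in> L1 M"
proof (rule L1I[OF cm])
  show "strongly_measurable M (\<lambda>s. k s + l s)" using assms by (intro SM_add) (auto simp: L1_def)
  show "integrable M (\<lambda>s. norm (k s + l s))"
  proof (rule Bochner_Integration.integrable_bound)
    show "integrable M (\<lambda>s. norm (k s) + norm (l s))"
      using L1_int[OF cm assms(2)] L1_int[OF cm assms(3)] by (rule Bochner_Integration.integrable_add)
    show "(\<lambda>s. norm (k s + l s)) \<in> borel_measurable M"
      using assms by (intro SM_meas[OF cm] SM_add isCont_norm') (auto simp: L1_def)
    show "AE x in M. norm (norm (k x + l x)) \<le> norm (norm (k x) + norm (l x))"
      by (auto intro!: AE_I2 norm_triangle_ineq)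
  qed
qed

lemma L1_scale: assumes cm: "complete_measure M" and "k \<in> L1 M"
  shows "(\<lambda>s. c *\<^sub>R k s) \<in> L1 M"
proof (rule L1I[OF cm])
  show "strongly_measurable M (\<lambda>s. c *\<^sub>R k s)" using assms by (intro SM_scale) (auto simp: L1_def)
  have "integrable M (\<lambda>s. \<bar>c\<bar> * norm (k s))"
    using L1_int[OF cm] assms by (intro integrable_mult_right) auto
  then show "integrable M (\<lambda>s. norm (c *\<^sub>R k s))" by simp
qed

lemma L1_ind: assumes cm: "complete_measure M" and "k \<in> L1 M" and A: "A \<in> sets M"
  shows "(\<lambda>s. indicator A s *\<^sub>R k s) \<in> L1 M"
proof (rule L1I[OF cm])
  show "strongly_measurable M (\<lambda>s. indicator A s *\<^sub>R k s)" using assms by (intro SM_ind) (auto simp: L1_def)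
  have "integrable M (\<lambda>s. indicator A s * norm (k s))"
    using integrable_mult_indicator[OF A L1_int[OF cm assms(2)]] by simp
  moreover have "(\<lambda>s. norm (indicator A s *\<^sub>R k s)) = (\<lambda>s. indicator A s * norm (k s))"
    by (auto simp: indicator_def fun_eq_iff)
  ultimately show "integrable M (\<lambda>s. norm (indicator A s *\<^sub>R k s))" by simp
qed

lemma L1_indc: assumes cm: "complete_measure M" and A: "A \<in> sets M" "emeasure M A < \<infinity>"
  shows "(\<lambda>s. indicator A s *\<^sub>R (v::'x::real_normed_vector)) \<in> L1 M"
proof (rule L1I[OF cm])
  show "strongly_measurable M (\<lambda>s. indicator A s *\<^sub>R v)" using assms by (intro SM_ind SM_const)
  have "integrable M (\<lambda>s. indicator A s * norm v)"
    using assms by (intro integrable_mult_left) auto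
  moreover have "(\<lambda>s. norm (indicator A s *\<^sub>R v)) = (\<lambda>s. indicator A s * norm v)"
    by (auto simp: indicator_def fun_eq_iff)
  ultimately show "integrable M (\<lambda>s. norm (indicator A s *\<^sub>R v))" by simp
qed

lemma sf_pos_subset:
  assumes sf: "sigma_finite_measure M" and C: "C \<in> sets M" and pos: "emeasure M C > 0"
  shows "\<exists>B\<in>sets M. B \<subseteq> C \<and> 0 < emeasure M B \<and> emeasure M B < \<infinity>"
proof (rule ccontr)
  assume H: "\<not> ?thesis"
  obtain E :: "nat \<Rightarrow> 'a set" where E: "range E \<subseteq> sets M" "(\<Union>i. E i) = space M" "\<And>i. emeasure M (E i) \<noteq> \<infinity>"
    using sigma_finite_measure.sigma_finite[OF sf] by metis
  have fin: "emeasure M (C \<inter> E i) < \<infinity>" for i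
    using emeasure_mono[of "C \<inter> E i" "E i" M] E(1) E(3)[of i] by (auto simp: less_top)
  have z: "emeasure M (C \<inter> E i) = 0" for i
    using H fin[of i] C E(1) by (metis Int_lower1 not_gr_zero rangeI sets.Int subsetD)
  have "emeasure M (\<Union>i. C \<inter> E i) = 0"
    by (rule emeasure_UN_eq_0) (use z C E(1) in auto)
  moreover have "(\<Union>i. C \<inter> E i) = C" using E(2) sets.sets_into_space[OF C] by auto
  ultimately show False using pos by simp
qed

lemma atom_finite:
  assumes sf: "sigma_finite_measure M" and at: "is_atom M A"
  shows "emeasure M A < \<infinity>"
proof -
  from at have A: "A \<in> sets M" "emeasure M A > 0" unfolding is_atom_def by auto
  obtain B where B: "B \<in> sets M" "B \<subseteq> A" "0 < emeasure M B" "emeasure M B < \<infinity>"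
    using sf_pos_subset[OF sf A] by blast
  then have "emeasure M B = emeasure M A" using at unfolding is_atom_def by auto
  then show ?thesis using B by simp
qed

lemma AE_ex:
  assumes "AE s in M. P s" "A \<in> sets M" "emeasure M A > 0"
  shows "\<exists>s\<in>A. P s"
proof (rule ccontr)
  assume H: "\<not> (\<exists>s\<in>A. P s)"
  obtain N where N: "{s \<in> space M. \<not> P s} \<subseteq> N" "emeasure M N = 0" "N \<in> sets M"
    using assms(1) by (rule AE_E)
  have "A \<subseteq> N" using H N(1) sets.sets_into_space[OF assms(2)] by blast
  then have "emeasure M A \<le> emeasure M N" by (rule emeasure_mono) (rule N(3))
  then show False using N(2) assms(3) by simp
qed

lemma atom_simple_const:
  assumes at: "is_atom M A" and fin: "emeasure M A < \<infinity>" and u: "simple_function M u"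
  shows "\<exists>c. AE s in M. s \<in> A \<longrightarrow> u s = c"
proof -
  from at have A: "A \<in> sets M" "emeasure M A > 0" unfolding is_atom_def by auto
  have Asp: "A \<subseteq> space M" using sets.sets_into_space[OF A(1)] .
  define P where "P c = A \<inter> (u -` {c} \<inter> space M)" for c
  have Ps: "P c \<in> sets M" for c
  proof -
    have "u -` {c} \<inter> space M \<in> sets M" using u sf_iff[of u M] by blast
    then show ?thesis unfolding P_def using A by blast
  qed
  have finI: "finite (u ` A)" using u Asp unfolding simple_function_def by (meson finite_subset image_mono)
  have Aeq: "A = (\<Union>c\<in>u ` A. P c)" using Asp unfolding P_def by auto
  have "\<exists>c. emeasure M (P c) \<noteq> 0"
  proof (rule ccontr)
    assume "\<nexists>c. emeasure M (P c) \<noteq> 0"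
    then have "\<And>c. emeasure M (P c) = 0" by blast
    have "emeasure M (\<Union>c\<in>u ` A. P c) \<le> (\<Sum>c\<in>u ` A. emeasure M (P c))"
      by (rule emeasure_subadditive_finite) (use finI Ps in auto)
    also have "\<dots> = 0" using \<open>\<And>c. emeasure M (P c) = 0\<close> by simp
    finally show False using Aeq A(2) by simp
  qed
  then obtain c where c: "emeasure M (P c) \<noteq> 0" by blast
  have "emeasure M (P c) = emeasure M A" using at c Ps[of c] unfolding is_atom_def P_def by auto
  then have "emeasure M (A - P c) = 0"
    using emeasure_Diff[of M "P c" A] fin Ps[of c] A(1) by (auto simp: P_def)
  then have "A - P c \<in> null_sets M" using A(1) Ps[of c] by auto
  then have "AE s in M. s \<in> A \<longrightarrow> u s = c"
    by (rule AE_I') (auto simp: P_def)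
  then show ?thesis by blast
qed

lemma atom_SM_const:
  assumes at: "is_atom M A" and fin: "emeasure M A < \<infinity>" and sm: "strongly_measurable M g"
  shows "\<exists>s0\<in>A. AE s in M. s \<in> A \<longrightarrow> g s = g s0"
proof -
  from at have A: "A \<in> sets M" "emeasure M A > 0" unfolding is_atom_def by auto
  obtain u where u: "\<forall>n. simple_function M (u n)" "AE s in M. (\<lambda>n. u n s) \<longlonglongrightarrow> g s"
    using sm unfolding SM_def2 by blast
  have "\<forall>n. \<exists>c. AE s in M. s \<in> A \<longrightarrow> u n s = c"
    using atom_simple_const[OF at fin] u(1) by blast
  then obtain c where c: "\<And>n. AE s in M. s \<in> A \<longrightarrow> u n s = c n" by metis
  have "AE s in M. \<forall>n. s \<in> A \<longrightarrow> u n s = c n"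
    by (subst AE_all_countable) (use c in blast)
  then have ae: "AE s in M. (\<forall>n. s \<in> A \<longrightarrow> u n s = c n) \<and> (\<lambda>n. u n s) \<longlonglongrightarrow> g s"
    using u(2) by eventually_elim blast
  obtain s0 where s0: "s0 \<in> A" "\<forall>n. s0 \<in> A \<longrightarrow> u n s0 = c n" "(\<lambda>n. u n s0) \<longlonglongrightarrow> g s0"
    using AE_ex[OF ae A] by blast
  have cl: "c \<longlonglongrightarrow> g s0" using s0 by simp
  have "AE s in M. s \<in> A \<longrightarrow> g s = g s0"
    using ae
  proof eventually_elim
    case (elim s)
    show ?case
    proof
      assume "s \<in> A"
      then have "(\<lambda>n. u n s) = c" using elim by auto
      then have "c \<longlonglongrightarrow> g s" using elim by simp
      then show "g s = g s0" using cl by (rule LIMSEQ_unique)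
    qed
  qed
  then show ?thesis using s0(1) by blast
qed



lemma L1norm_nonneg: "L1norm M k \<ge> 0"
  unfolding L1norm_def by simp

lemma L1norm_scale: assumes cm: "complete_measure M" and k: "k \<in> L1 M"
  shows "L1norm M (\<lambda>s. c *\<^sub>R k s) = \<bar>c\<bar> * L1norm M k"
  using L1norm_int[OF cm L1_scale[OF cm k, of c]] L1norm_int[OF cm k] by simp

lemma dual_ae:
  assumes cm: "complete_measure M" and F: "F \<in> L1_dual M" and g: "g \<in> L1 M" and h: "h \<in> L1 M"
    and ae: "AE s in M. g s = h s"
  shows "F g = F h"
proof -
  obtain K where K: "\<And>g. g \<in> L1 M \<Longrightarrow> \<bar>F g\<bar> \<le> K * L1norm M g"
    using F unfolding L1_dual_def by blast
  define h' where "h' = (\<lambda>s. (-1::real) *\<^sub>R h s)"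
  have h': "h' \<in> L1 M" unfolding h'_def by (rule L1_scale[OF cm h])
  have sum: "(\<lambda>s. g s + h' s) \<in> L1 M" by (rule L1_add[OF cm g h'])
  have "F (\<lambda>s. g s + h' s) = F g + F h'" using F g h' unfolding L1_dual_def by blast
  moreover have "F h' = (-1) * F h" using F h unfolding L1_dual_def h'_def by blast
  moreover have "L1norm M (\<lambda>s. g s + h' s) = 0"
  proof -
    have "(\<integral>\<^sup>+ s. ennreal (norm (g s + h' s)) \<partial>M) = (\<integral>\<^sup>+ s. 0 \<partial>M)"
      by (rule nn_integral_cong_AE) (use ae in \<open>auto simp: h'_def\<close>)
    then show ?thesis unfolding L1norm_def by simp
  qed
  ultimately show ?thesis using K[OF sum] by simp
qed

lemma dual_bound:
  assumes cm: "complete_measure M" and F: "F \<in> L1_dual M" and n1: "L1_dual_norm M F = 1"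
    and g: "g \<in> L1 M"
  shows "\<bar>F g\<bar> \<le> L1norm M g"
proof -
  obtain K where K: "\<And>g. g \<in> L1 M \<Longrightarrow> \<bar>F g\<bar> \<le> K * L1norm M g"
    using F unfolding L1_dual_def by blast
  define r where "r = L1norm M g"
  have r0: "r \<ge> 0" unfolding r_def by (rule L1norm_nonneg)
  show ?thesis
  proof (cases "r = 0")
    case True then show ?thesis using K[OF g] by (simp add: r_def)
  next
    case False
    then have rp: "r > 0" using r0 by simp
    define g' where "g' = (\<lambda>s. (1/r) *\<^sub>R g s)"
    have g': "g' \<in> L1 M" unfolding g'_def by (rule L1_scale[OF cm g])
    have ng': "L1norm M g' = 1" unfolding g'_def using L1norm_scale[OF cm g, of "1/r"] rp by (simp add: r_def)
    have Fg': "F g' = (1/r) * F g" using F g unfolding L1_dual_def g'_def by blast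
    define S where "S = {\<bar>F g\<bar> | g. g \<in> L1 M \<and> L1norm M g \<le> 1}"
    have "bdd_above S"
    proof (rule bdd_aboveI[of _ "\<bar>K\<bar>"])
      fix y assume "y \<in> S"
      then obtain h where h: "y = \<bar>F h\<bar>" "h \<in> L1 M" "L1norm M h \<le> 1" unfolding S_def by blast
      have "K * L1norm M h \<le> \<bar>K\<bar> * L1norm M h" by (simp add: L1norm_nonneg mult_right_mono)
      also have "\<dots> \<le> \<bar>K\<bar>" by (rule mult_left_le) (use h(3) in auto)
      finally show "y \<le> \<bar>K\<bar>" using K[OF h(2)] h(1) by simp
    qed
    moreover have "\<bar>F g'\<bar> \<in> S" unfolding S_def using g' ng' by auto
    ultimately have "\<bar>F g'\<bar> \<le> Sup S" by (simp add: cSup_upper)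
    also have "Sup S = 1" using n1 unfolding L1_dual_norm_def S_def .
    finally have "\<bar>F g\<bar> / r \<le> 1" using Fg' rp by (simp add: abs_mult)
    then show ?thesis using rp by (simp add: r_def field_simps)
  qed
qed



lemma smooth_null:
  fixes M :: "'s measure" and f :: "'s \<Rightarrow> 'x::real_normed_vector"
  assumes cm: "complete_measure M" and sf: "sigma_finite_measure M"
    and f: "f \<in> L1 M" and sm: "L1_smooth M f"
    and at: "is_atom M A" and Adef: "A = {s \<in> space M. f s \<noteq> 0}"
  shows "emeasure M (space M - A) = 0"
proof (rule ccontr)
  assume H: "emeasure M (space M - A) \<noteq> 0"
  have A: "A \<in> sets M" "emeasure M A > 0" using at unfolding is_atom_def by auto
  have Afin: "emeasure M A < \<infinity>" by (rule atom_finite[OF sf at])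
  define m where "m = measure M A"
  have emA: "emeasure M A = ennreal m" unfolding m_def using Afin by (simp add: emeasure_eq_ennreal_measure)
  have mpos: "m > 0" using A(2) emA by simp
  have Asp: "A \<subseteq> space M" using sets.sets_into_space[OF A(1)] .
  obtain s1 where s1: "s1 \<in> A" "AE s in M. s \<in> A \<longrightarrow> f s = f s1"
    using atom_SM_const[OF at Afin] f unfolding L1_def by blast
  define x where "x = f s1"
  have fx: "AE s in M. s \<in> A \<longrightarrow> f s = x" using s1(2) unfolding x_def .
  have f0: "\<And>s. s \<in> space M \<Longrightarrow> s \<notin> A \<Longrightarrow> f s = 0" using Adef by auto
  obtain F where F: "L1_norming M f F" using sm unfolding L1_smooth_def by blast
  have Fd: "F \<in> L1_dual M" and Fn: "L1_dual_norm M F = 1" and Ff: "F f = L1norm M f"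
    using F unfolding L1_norming_def by auto
  have Fadd: "\<And>g h. g \<in> L1 M \<Longrightarrow> h \<in> L1 M \<Longrightarrow> F (\<lambda>s. g s + h s) = F g + F h"
    using Fd unfolding L1_dual_def by blast
  have Fsc: "\<And>g c. g \<in> L1 M \<Longrightarrow> F (\<lambda>s. c *\<^sub>R g s) = c * F g"
    using Fd unfolding L1_dual_def by blast
  have Fb: "\<And>g. g \<in> L1 M \<Longrightarrow> \<bar>F g\<bar> \<le> L1norm M g"
    by (rule dual_bound[OF cm Fd Fn])
  have nf: "L1norm M f > 0" using sm L1norm_nonneg[of M f] unfolding L1_smooth_def by simp
  define C where "C = space M - A"
  have Cs: "C \<in> sets M" unfolding C_def using A(1) by blast
  define \<psi> where "\<psi> v = F (\<lambda>s. indicator A s *\<^sub>R v)" for v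
  have indc: "\<And>v. (\<lambda>s. indicator A s *\<^sub>R v) \<in> L1 M" using L1_indc[OF cm A(1) Afin] .
  have \<psi>add: "\<psi> (v + w) = \<psi> v + \<psi> w" for v w
  proof -
    have "(\<lambda>s. indicator A s *\<^sub>R (v + w)) = (\<lambda>s. indicator A s *\<^sub>R v + indicator A s *\<^sub>R w)"
      by (simp add: scaleR_add_right)
    then show ?thesis unfolding \<psi>_def using Fadd[OF indc indc] by simp
  qed
  have \<psi>sc: "\<psi> (c *\<^sub>R v) = c * \<psi> v" for c v
  proof -
    have "(\<lambda>s. indicator A s *\<^sub>R (c *\<^sub>R v)) = (\<lambda>s. c *\<^sub>R (indicator A s *\<^sub>R v))"
      by (simp add: mult.commute)
    then show ?thesis unfolding \<psi>_def using Fsc[OF indc] by simp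
  qed
  have \<psi>0: "\<psi> 0 = 0" using \<psi>sc[of 0 0] by simp
  have \<psi>b: "\<bar>\<psi> v\<bar> \<le> m * norm v" for v
  proof -
    have "L1norm M (\<lambda>s. indicator A s *\<^sub>R v) = (\<integral>s. norm (indicator A s *\<^sub>R v) \<partial>M)"
      by (rule L1norm_int[OF cm indc])
    also have "\<dots> = (\<integral>s. indicator A s * norm v \<partial>M)"
      by (rule Bochner_Integration.integral_cong) (auto simp: indicator_def)
    also have "\<dots> = m * norm v" using Asp by (simp add: m_def Int_absorb2)
    finally show ?thesis using Fb[OF indc[of v]] unfolding \<psi>_def by simp
  qed
  have \<psi>bl: "bounded_linear \<psi>"
    by (rule bounded_linear_intro[of _ m]) (use \<psi>add \<psi>sc \<psi>b in \<open>auto simp: mult.commute\<close>)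
  have \<psi>c: "\<And>v. isCont \<psi> v" using \<psi>bl by (simp add: linear_continuous_at)
  have \<psi>x: "\<psi> x = L1norm M f"
  proof -
    have "AE s in M. indicator A s *\<^sub>R x = f s"
      using fx AE_space
    proof (eventually_elim)
      case (elim s)
      show ?case
      proof (cases "s \<in> A")
        case True then show ?thesis using elim by simp
      next
        case False then show ?thesis using elim f0[of s] by simp
      qed
    qed
    then have "\<psi> x = F f" unfolding \<psi>_def by (rule dual_ae[OF cm Fd indc f])
    then show ?thesis using Ff by simp
  qed
  have \<psi>int: "integrable M (\<lambda>s. \<psi> (k s))" if k: "k \<in> L1 M" for k
  proof (rule Bochner_Integration.integrable_bound)
    show "integrable M (\<lambda>s. m * norm (k s))" using L1_int[OF cm k] by (rule integrable_mult_right)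
    show "(\<lambda>s. \<psi> (k s)) \<in> borel_measurable M"
      by (rule SM_meas[OF cm _ \<psi>c]) (use k in \<open>simp add: L1_def\<close>)
    show "AE s in M. norm (\<psi> (k s)) \<le> norm (m * norm (k s))"
      using \<psi>b mpos by (auto intro!: AE_I2)
  qed
  have \<psi>Cint: "integrable M (\<lambda>s. \<psi> (k s) * indicator C s)" if k: "k \<in> L1 M" for k
    by (rule integrable_real_mult_indicator[OF Cs \<psi>int[OF k]])
  have nCint: "integrable M (\<lambda>s. norm (k s) * indicator C s)" if k: "k \<in> L1 M" for k
    by (rule integrable_real_mult_indicator[OF Cs L1_int[OF cm k]])
  have nAint: "integrable M (\<lambda>s. norm (k s) * indicator A s)" if k: "k \<in> L1 M" for k
    by (rule integrable_real_mult_indicator[OF A(1) L1_int[OF cm k]])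
  define \<Phi> where "\<Phi> k = (\<integral>s. \<psi> (k s) * indicator C s \<partial>M) / m" for k
  have \<Phi>add: "\<Phi> (\<lambda>s. g s + h s) = \<Phi> g + \<Phi> h" if g: "g \<in> L1 M" and h: "h \<in> L1 M" for g h
  proof -
    have "(\<integral>s. \<psi> (g s + h s) * indicator C s \<partial>M)
        = (\<integral>s. \<psi> (g s) * indicator C s + \<psi> (h s) * indicator C s \<partial>M)"
      by (simp add: \<psi>add distrib_right)
    also have "\<dots> = (\<integral>s. \<psi> (g s) * indicator C s \<partial>M) + (\<integral>s. \<psi> (h s) * indicator C s \<partial>M)"
      by (rule Bochner_Integration.integral_add[OF \<psi>Cint[OF g] \<psi>Cint[OF h]])
    finally show ?thesis unfolding \<Phi>_def by (simp add: add_divide_distrib)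
  qed
  have \<Phi>sc: "\<Phi> (\<lambda>s. c *\<^sub>R g s) = c * \<Phi> g" if g: "g \<in> L1 M" for g c
  proof -
    have "(\<integral>s. \<psi> (c *\<^sub>R g s) * indicator C s \<partial>M) = (\<integral>s. c * (\<psi> (g s) * indicator C s) \<partial>M)"
      by (simp add: \<psi>sc mult.assoc)
    also have "\<dots> = c * (\<integral>s. \<psi> (g s) * indicator C s \<partial>M)" by simp
    finally show ?thesis unfolding \<Phi>_def by simp
  qed
  have \<Phi>b: "\<bar>\<Phi> k\<bar> \<le> (\<integral>s. norm (k s) * indicator C s \<partial>M)" if k: "k \<in> L1 M" for k
  proof -
    have "\<bar>\<integral>s. \<psi> (k s) * indicator C s \<partial>M\<bar> \<le> (\<integral>s. \<bar>\<psi> (k s) * indicator C s\<bar> \<partial>M)"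
      by (rule integral_abs_bound)
    also have "\<dots> \<le> (\<integral>s. m * (norm (k s) * indicator C s) \<partial>M)"
    proof (rule integral_mono)
      show "integrable M (\<lambda>s. \<bar>\<psi> (k s) * indicator C s\<bar>)" using \<psi>Cint[OF k] by (rule integrable_abs)
      show "integrable M (\<lambda>s. m * (norm (k s) * indicator C s))" using nCint[OF k] by (rule integrable_mult_right)
      fix s show "\<bar>\<psi> (k s) * indicator C s\<bar> \<le> m * (norm (k s) * indicator C s)"
        using \<psi>b[of "k s"] by (auto simp: indicator_def abs_mult)
    qed
    also have "\<dots> = m * (\<integral>s. norm (k s) * indicator C s \<partial>M)" by simp
    finally show ?thesis unfolding \<Phi>_def using mpos by (simp add: divide_le_eq abs_divide mult.commute)
  qed
  have \<Phi>f: "\<Phi> f = 0"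
  proof -
    have "(\<integral>s. \<psi> (f s) * indicator C s \<partial>M) = (\<integral>s. 0 \<partial>M)"
      by (rule Bochner_Integration.integral_cong) (auto simp: C_def f0 \<psi>0 split: split_indicator)
    then show ?thesis unfolding \<Phi>_def by simp
  qed
  define G where "G \<sigma> k = F (\<lambda>s. indicator A s *\<^sub>R k s) + \<sigma> * \<Phi> k" for \<sigma> :: real and k
  have indL: "\<And>k. k \<in> L1 M \<Longrightarrow> (\<lambda>s. indicator A s *\<^sub>R k s) \<in> L1 M" using L1_ind[OF cm _ A(1)] .
  have Gb: "\<bar>G \<sigma> k\<bar> \<le> L1norm M k" if k: "k \<in> L1 M" and sg: "\<bar>\<sigma>\<bar> \<le> 1" for \<sigma> k
  proof -
    have "\<bar>F (\<lambda>s. indicator A s *\<^sub>R k s)\<bar> \<le> L1norm M (\<lambda>s. indicator A s *\<^sub>R k s)"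
      by (rule Fb[OF indL[OF k]])
    also have "\<dots> = (\<integral>s. norm (indicator A s *\<^sub>R k s) \<partial>M)" by (rule L1norm_int[OF cm indL[OF k]])
    also have "\<dots> = (\<integral>s. norm (k s) * indicator A s \<partial>M)"
      by (rule Bochner_Integration.integral_cong) (auto simp: indicator_def)
    finally have 1: "\<bar>F (\<lambda>s. indicator A s *\<^sub>R k s)\<bar> \<le> (\<integral>s. norm (k s) * indicator A s \<partial>M)" .
    have "\<bar>\<sigma> * \<Phi> k\<bar> \<le> \<bar>\<Phi> k\<bar>" using sg by (simp add: abs_mult mult_left_le_one_le)
    then have 2: "\<bar>\<sigma> * \<Phi> k\<bar> \<le> (\<integral>s. norm (k s) * indicator C s \<partial>M)" using \<Phi>b[OF k] by linarith
    have "(\<integral>s. norm (k s) * indicator A s \<partial>M) + (\<integral>s. norm (k s) * indicator C s \<partial>M)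
        = (\<integral>s. norm (k s) * indicator A s + norm (k s) * indicator C s \<partial>M)"
      by (rule Bochner_Integration.integral_add[OF nAint[OF k] nCint[OF k], symmetric])
    also have "\<dots> = (\<integral>s. norm (k s) \<partial>M)"
      by (rule Bochner_Integration.integral_cong) (auto simp: indicator_def C_def)
    also have "\<dots> = L1norm M k" by (rule L1norm_int[OF cm k, symmetric])
    finally have 3: "(\<integral>s. norm (k s) * indicator A s \<partial>M) + (\<integral>s. norm (k s) * indicator C s \<partial>M) = L1norm M k" .
    show ?thesis unfolding G_def using 1 2 3 by linarith
  qed
  have Gf: "G \<sigma> f = L1norm M f" for \<sigma>
  proof -
    have "F (\<lambda>s. indicator A s *\<^sub>R f s) = F f"
      by (rule dual_ae[OF cm Fd indL[OF f] f]) (auto intro!: AE_I2 simp: indicator_def f0)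
    then show ?thesis unfolding G_def using \<Phi>f Ff by simp
  qed
  have Gnorming: "L1_norming M f (G \<sigma>)" if sg: "\<bar>\<sigma>\<bar> \<le> 1" for \<sigma>
  proof -
    have dual: "G \<sigma> \<in> L1_dual M"
      unfolding L1_dual_def
    proof (intro CollectI conjI ballI allI)
      fix g h :: "'s \<Rightarrow> 'x" assume g: "g \<in> L1 M" and h: "h \<in> L1 M"
      have "(\<lambda>s. indicator A s *\<^sub>R (g s + h s)) = (\<lambda>s. indicator A s *\<^sub>R g s + indicator A s *\<^sub>R h s)"
        by (simp add: scaleR_add_right)
      then show "G \<sigma> (\<lambda>s. g s + h s) = G \<sigma> g + G \<sigma> h"
        unfolding G_def using Fadd[OF indL[OF g] indL[OF h]] \<Phi>add[OF g h] by (simp add: algebra_simps)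
    next
      fix g :: "'s \<Rightarrow> 'x" and c :: real assume g: "g \<in> L1 M"
      have "(\<lambda>s. indicator A s *\<^sub>R (c *\<^sub>R g s)) = (\<lambda>s. c *\<^sub>R (indicator A s *\<^sub>R g s))"
        by (simp add: mult.commute)
      then show "G \<sigma> (\<lambda>s. c *\<^sub>R g s) = c * G \<sigma> g"
        unfolding G_def using Fsc[OF indL[OF g]] \<Phi>sc[OF g] by (simp add: algebra_simps)
    next
      show "\<exists>K. \<forall>g\<in>L1 M. \<bar>G \<sigma> g\<bar> \<le> K * L1norm M g"
        using Gb sg by (intro exI[of _ 1]) auto
    qed
    define r where "r = L1norm M f"
    define f' where "f' = (\<lambda>s. (1/r) *\<^sub>R f s)"
    have f': "f' \<in> L1 M" unfolding f'_def by (rule L1_scale[OF cm f])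
    have nf': "L1norm M f' = 1" unfolding f'_def using L1norm_scale[OF cm f, of "1/r"] nf by (simp add: r_def)
    have Gf': "G \<sigma> f' = 1"
    proof -
      have "G \<sigma> f' = (1/r) * G \<sigma> f" unfolding f'_def
      proof -
        have eq: "(\<lambda>s. indicator A s *\<^sub>R ((1/r) *\<^sub>R f s)) = (\<lambda>s. (1/r) *\<^sub>R (indicator A s *\<^sub>R f s))"
          by (simp add: mult.commute)
        have e1: "F (\<lambda>s. indicator A s *\<^sub>R ((1/r) *\<^sub>R f s)) = (1/r) * F (\<lambda>s. indicator A s *\<^sub>R f s)"
          unfolding eq by (rule Fsc[OF indL[OF f]])
        show "G \<sigma> (\<lambda>s. (1/r) *\<^sub>R f s) = (1/r) * G \<sigma> f"
          unfolding G_def e1 \<Phi>sc[OF f] by (simp add: algebra_simps)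
      qed
      then show ?thesis using Gf[of \<sigma>] nf by (simp add: r_def)
    qed
    have "L1_dual_norm M (G \<sigma>) = 1"
      unfolding L1_dual_norm_def
    proof (rule cSup_eq_maximum)
      show "1 \<in> {\<bar>G \<sigma> g\<bar> |g. g \<in> L1 M \<and> L1norm M g \<le> 1}"
      proof -
        have "1 = \<bar>G \<sigma> f'\<bar> \<and> f' \<in> L1 M \<and> L1norm M f' \<le> 1" using f' nf' Gf' by simp
        then show ?thesis by blast
      qed
      fix y assume "y \<in> {\<bar>G \<sigma> g\<bar> |g. g \<in> L1 M \<and> L1norm M g \<le> 1}"
      then obtain g where "y = \<bar>G \<sigma> g\<bar>" "g \<in> L1 M" "L1norm M g \<le> 1" by blast
      then show "y \<le> 1" using Gb[of g \<sigma>] sg by linarith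
    qed
    then show ?thesis unfolding L1_norming_def using dual Gf by simp
  qed
  have "\<forall>g\<in>L1 M. G 1 g = G (-1) g"
  proof -
    have n1: "L1_norming M f (G 1)" by (rule Gnorming) simp
    have n2: "L1_norming M f (G (-1))" by (rule Gnorming) simp
    have "\<forall>F G. L1_norming M f F \<longrightarrow> L1_norming M f G \<longrightarrow> (\<forall>g\<in>L1 M. F g = G g)"
      using sm unfolding L1_smooth_def by (elim conjE)
    then show ?thesis using n1 n2 by (elim allE impE) (assumption+)
  qed
  then have \<Phi>0: "\<Phi> g = 0" if "g \<in> L1 M" for g
  proof -
    have "G 1 g = G (-1) g" using \<open>\<forall>g\<in>L1 M. G 1 g = G (-1) g\<close> that by blast
    then show ?thesis unfolding G_def by simp
  qed
  have "emeasure M C > 0" using H unfolding C_def by (simp add: zero_less_iff_neq_zero)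
  then obtain B where B: "B \<in> sets M" "B \<subseteq> C" "0 < emeasure M B" "emeasure M B < \<infinity>"
    using sf_pos_subset[OF sf Cs] by blast
  have k: "(\<lambda>s. indicator B s *\<^sub>R x) \<in> L1 M" by (rule L1_indc[OF cm B(1) B(4)])
  have "(\<integral>s. \<psi> (indicator B s *\<^sub>R x) * indicator C s \<partial>M) = (\<integral>s. indicator B s * \<psi> x \<partial>M)"
    by (rule Bochner_Integration.integral_cong) (use B(2) \<psi>0 in \<open>auto simp: indicator_def\<close>)
  also have "\<dots> = measure M B * \<psi> x"
    using sets.sets_into_space[OF B(1)] by (simp add: Int_absorb2)
  finally have "\<Phi> (\<lambda>s. indicator B s *\<^sub>R x) = measure M B * \<psi> x / m" unfolding \<Phi>_def by simp
  moreover have "measure M B > 0" unfolding measure_def using B(3,4) by (simp add: enn2real_positive_iff)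
  ultimately have "\<Phi> (\<lambda>s. indicator B s *\<^sub>R x) \<noteq> 0" using \<psi>x nf mpos by simp
  then show False using \<Phi>0[OF k] by simp
qed



lemma L1norm_const:
  assumes "AE s in M. h s = v" "emeasure M (space M) = ennreal m" "m \<ge> 0"
  shows "L1norm M h = norm v * m"
proof -
  have "(\<integral>\<^sup>+ s. ennreal (norm (h s)) \<partial>M) = (\<integral>\<^sup>+ s. ennreal (norm v) \<partial>M)"
    by (rule nn_integral_cong_AE) (use assms(1) in auto)
  also have "\<dots> = ennreal (norm v * m)" using assms(2,3) by (simp add: ennreal_mult)
  finally show ?thesis unfolding L1norm_def using assms(3) by simp
qed

theorem theorem3p9:
  fixes M :: "'s measure" and f :: "'s \<Rightarrow> 'x::banach"
  assumes "frechet_diff_norm TYPE('x)"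
    and "complete_measure M"
    and "sigma_finite_measure M"
    and "f \<in> L1 M"
    and "L1_smooth M f"
    and "is_atom M {s \<in> space M. f s \<noteq> 0}"
    and "\<forall>s\<in>space M. left_symmetric (f s)"
  shows "L1_left_symmetric M f"
proof -
  note cm = assms(2) and sf = assms(3) and f = assms(4) and sm = assms(5) and ls = assms(7)
  define A where "A = {s \<in> space M. f s \<noteq> 0}"
  have at: "is_atom M A" using assms(6) unfolding A_def .
  have null: "emeasure M (space M - A) = 0" by (rule smooth_null[OF cm sf f sm at A_def])
  have A: "A \<in> sets M" "emeasure M A > 0" using at unfolding is_atom_def by auto
  have Afin: "emeasure M A < \<infinity>" by (rule atom_finite[OF sf at])
  define m where "m = measure M A"
  have emA: "emeasure M A = ennreal m" unfolding m_def using Afin by (simp add: emeasure_eq_ennreal_measure)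
  have mpos: "m > 0" using A(2) emA by simp
  have Asp: "A \<subseteq> space M" using sets.sets_into_space[OF A(1)] .
  have Cnull: "space M - A \<in> null_sets M" using null A(1) by auto
  have emS: "emeasure M (space M) = ennreal m"
  proof -
    have "emeasure M (space M - (space M - A)) = emeasure M (space M)"
      by (rule emeasure_Diff_null_set[OF Cnull]) simp
    moreover have "space M - (space M - A) = A" using Asp by blast
    ultimately show ?thesis using emA by simp
  qed
  have aeA: "AE s in M. s \<in> A" by (rule AE_I'[OF Cnull]) blast
  obtain s1 where s1: "s1 \<in> A" "AE s in M. s \<in> A \<longrightarrow> f s = f s1"
    using atom_SM_const[OF at Afin] f unfolding L1_def by blast
  define x where "x = f s1"
  have fx: "AE s in M. f s = x" using s1(2) aeA unfolding x_def by eventually_elim blast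
  have lsx: "left_symmetric x" using ls s1(1) Asp unfolding x_def by blast
  show ?thesis
    unfolding L1_left_symmetric_def
  proof (intro ballI impI)
    fix g assume g: "g \<in> L1 M" and orth: "L1_orth M f g"
    obtain s2 where s2: "s2 \<in> A" "AE s in M. s \<in> A \<longrightarrow> g s = g s2"
      using atom_SM_const[OF at Afin] g unfolding L1_def by blast
    define y where "y = g s2"
    have gy: "AE s in M. g s = y" using s2(2) aeA unfolding y_def by eventually_elim blast
    have m0: "m \<ge> 0" using mpos by simp
    have nfg: "L1norm M (\<lambda>s. f s + t *\<^sub>R g s) = norm (x + t *\<^sub>R y) * m" for t
    proof -
      have "AE s in M. f s + t *\<^sub>R g s = x + t *\<^sub>R y" using fx gy by eventually_elim simp
      then show ?thesis by (rule L1norm_const[OF _ emS m0])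
    qed
    have ngf: "L1norm M (\<lambda>s. g s + t *\<^sub>R f s) = norm (y + t *\<^sub>R x) * m" for t
    proof -
      have "AE s in M. g s + t *\<^sub>R f s = y + t *\<^sub>R x" using fx gy by eventually_elim simp
      then show ?thesis by (rule L1norm_const[OF _ emS m0])
    qed
    have nf: "L1norm M f = norm x * m" by (rule L1norm_const[OF fx emS m0])
    have ng: "L1norm M g = norm y * m" by (rule L1norm_const[OF gy emS m0])
    have "bj_orth x y"
      unfolding bj_orth_def
    proof
      fix t :: real
      have "L1norm M f \<le> L1norm M (\<lambda>s. f s + t *\<^sub>R g s)" using orth unfolding L1_orth_def by blast
      then have "norm x * m \<le> norm (x + t *\<^sub>R y) * m" unfolding nfg nf .
      then show "norm x \<le> norm (x + t *\<^sub>R y)" using mpos by simp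
    qed
    then have "bj_orth y x" using lsx unfolding left_symmetric_def by blast
    then show "L1_orth M g f"
      unfolding L1_orth_def bj_orth_def using ngf ng mpos by (simp add: mult_right_mono)
  qed
qed

end
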